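(* Suppose that $\mathbb{E}\big[\int_{\mathbb{R}}|g^{(k)}(-s)\sigma_s|^\beta\mathbf 1_{(-\infty,-\delta]}(s)\,ds\big]<\infty$, and assume that $\alpha+1/\beta<k$. For $\varepsilon>0$ with $\varepsilon\le\delta$ there is a constant $C>0$ such that $$\mathbb{E}\Big[\int_{\frac in-\varepsilon}^{\frac in}|g_{i,n}(s)\sigma_{s-}|^\beta ds\Big]+\int_{\frac in-\varepsilon}^{\frac in}|g_{i,n}(s)|^\beta ds\le Cn^{-\alpha\beta-1},$$ $$\mathbb{E}\Big[\int_{-\infty}^{\frac in-\varepsilon}|g_{i,n}(s)\sigma_{s-}|^\beta ds\Big]+\int_{-\infty}^{\frac in-\varepsilon}|g_{i,n}(s)|^\beta ds\le Cn^{-k\beta},$$ for all $i\in\{k,\dots,n\}$.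
   Context: $L$ is a symmetric $\beta$-stable Lévy process, $\beta\in(0,2)$; $\sigma$ is a càdlàg adapted process, uniformly bounded on $[-\delta,\infty)$ by a deterministic constant. $g:\mathbb{R}\to\mathbb{R}$ vanishes on $(-\infty,0)$ and satisfies $g(t)\sim c_0t^\alpha$ as $t\downarrow0$ ($\alpha>0$, $c_0\ne0$), is $k$-times continuously differentiable on $(0,\infty)$, and for some $\delta>0$ satisfies $|g^{(k)}(t)|\le Ct^{\alpha-k}$ on $(0,\delta)$, with $|g'|,|g^{(k)}|\in L^\beta((\delta,\infty))$ and decreasing on $(\delta,\infty)$ (and $g-g_0$ bounded in $L^\beta(\mathbb{R}_+)$ for the accompanying $g_0$). Here $g_{i,n}(s)=\sum_{j=0}^k(-1)^j\binom kj g((i-j)/n-s)$. *)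

theory Defs
  imports "HOL-Probability.Probability" "HOL-Library.Landau_Symbols"
begin

definition g_in :: "(real \<Rightarrow> real) \<Rightarrow> nat \<Rightarrow> nat \<Rightarrow> nat \<Rightarrow> real \<Rightarrow> real" where
  "g_in g k i n s = (\<Sum>j = 0..k. (-1) ^ j * real (k choose j) * g ((real i - real j) / real n - s))"

definition left_lim :: "(real \<Rightarrow> real) \<Rightarrow> real \<Rightarrow> real" where
  "left_lim f s = Lim (at_left s) f"

definition cadlag :: "(real \<Rightarrow> real) \<Rightarrow> bool" where
  "cadlag f \<longleftrightarrow> (\<forall>t. continuous (at_right t) f \<and> (\<exists>l. (f \<longlongrightarrow> l) (at_left t)))"

end

theory Submission
  imports Defs
begin


definition fdS :: "nat \<Rightarrow> (nat \<Rightarrow> real) \<Rightarrow> real" where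
  "fdS m a = (\<Sum>t=0..m. (-1)^(m-t) * real (m choose t) * a t)"

lemma fdS_Suc: "fdS (Suc m) a = fdS m (\<lambda>t. a (Suc t) - a t)"
proof -
  have A: "(\<Sum>t=0..Suc m. (-1)^(Suc m-t) * real (m choose t) * a t) = - (\<Sum>t=0..m. (-1)^(m-t) * real (m choose t) * a t)"
    by (auto simp add: sum_negf[symmetric] Suc_diff_le intro!: sum.cong)
  have B: "(\<Sum>t=0..Suc m. (-1)^(Suc m-t) * real (if t = 0 then 0 else m choose (t - 1)) * a t)
      = (\<Sum>t=0..m. (-1)^(m-t) * real (m choose t) * a (Suc t))"
    by (subst sum.atLeast0_atMost_Suc_shift) simp
  have "fdS (Suc m) a = (\<Sum>t=0..Suc m. (-1)^(Suc m-t) * (real (m choose t) + real (if t = 0 then 0 else m choose (t - 1))) * a t)"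
    unfolding fdS_def
    by (intro sum.cong refl) (auto simp: choose_reduce_nat[of "Suc m"] not0_implies_Suc)
  also have "\<dots> = (\<Sum>t=0..Suc m. (-1)^(Suc m-t) * real (m choose t) * a t) + (\<Sum>t=0..Suc m. (-1)^(Suc m-t) * real (if t = 0 then 0 else m choose (t - 1)) * a t)"
    by (simp add: algebra_simps sum.distrib)
  also have "\<dots> = fdS m (\<lambda>t. a (Suc t) - a t)"
    unfolding A B fdS_def by (simp add: algebra_simps sum_subtractf)
  finally show ?thesis .
qed

lemma fd_bound:
  fixes f :: "nat \<Rightarrow> real \<Rightarrow> real"
  assumes h: "h \<ge> 0"
    and der: "\<And>j y. j < m \<Longrightarrow> x \<le> y \<Longrightarrow> y \<le> x + real m * h \<Longrightarrow> (f j has_real_derivative f (Suc j) y) (at y)"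
    and B: "\<And>y. x \<le> y \<Longrightarrow> y \<le> x + real m * h \<Longrightarrow> \<bar>f m y\<bar> \<le> B"
  shows "\<bar>fdS m (\<lambda>t. f 0 (x + real t * h))\<bar> \<le> h^m * B"
  using der B
proof (induction m arbitrary: f B)
  case 0
  then show ?case by (simp add: fdS_def)
next
  case (Suc m)
  define F where "F = (\<lambda>j y. f j (y + h) - f j y)"
  have eq: "fdS (Suc m) (\<lambda>t. f 0 (x + real t * h)) = fdS m (\<lambda>t. F 0 (x + real t * h))"
    unfolding fdS_Suc F_def by (simp add: algebra_simps)
  have derF: "(F j has_real_derivative F (Suc j) y) (at y)"
    if "j < m" "x \<le> y" "y \<le> x + real m * h" for j y
  proof -
    have d1: "(f j has_real_derivative f (Suc j) (y + h)) (at (y + h))"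
      using that h by (intro Suc.prems(1)) (auto simp: algebra_simps)
    have d2: "(f j has_real_derivative f (Suc j) y) (at y)"
      using that h by (intro Suc.prems(1)) (auto simp: algebra_simps mult_nonneg_nonneg)
    from d1 have d1': "((\<lambda>y. f j (y + h)) has_real_derivative f (Suc j) (y + h)) (at y)"
      by (simp add: DERIV_shift)
    show ?thesis unfolding F_def using DERIV_diff[OF d1' d2] by simp
  qed
  have BF: "\<bar>F m y\<bar> \<le> h * B" if "x \<le> y" "y \<le> x + real m * h" for y
  proof (cases "h = 0")
    case True then show ?thesis by (simp add: F_def)
  next
    case False
    with h have hp: "h > 0" by simp
    have "\<exists>z. y < z \<and> z < y + h \<and> f m (y + h) - f m y = (y + h - y) * f (Suc m) z"
      using hp that by (intro MVT2) (auto intro!: Suc.prems(1) simp: algebra_simps)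
    then obtain z where z: "y < z" "z < y + h" "f m (y + h) - f m y = h * f (Suc m) z" by auto
    have "\<bar>f (Suc m) z\<bar> \<le> B" using z that by (intro Suc.prems(2)) (auto simp: algebra_simps)
    then show ?thesis using z hp by (simp add: F_def abs_mult mult_left_mono)
  qed
  have "\<bar>fdS m (\<lambda>t. F 0 (x + real t * h))\<bar> \<le> h^m * (h * B)"
    by (rule Suc.IH) (auto intro: derF BF)
  then show ?case using eq by (simp add: algebra_simps)
qed

lemma g_in_fdS:
  assumes "k \<le> i"
  shows "g_in g k i n s = fdS k (\<lambda>t. g ((real i - real k) / real n - s + real t * (1 / real n)))"
proof -
  have "g_in g k i n s = (\<Sum>t=0..k. (-1) ^ (k - t) * real (k choose (k - t)) * g ((real i - real (k - t)) / real n - s))"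
    unfolding g_in_def by (subst sum.atLeastAtMost_rev) simp
  also have "\<dots> = fdS k (\<lambda>t. g ((real i - real k) / real n - s + real t * (1 / real n)))"
    unfolding fdS_def
    by (intro sum.cong refl) (auto simp: binomial_symmetric[symmetric] of_nat_diff diff_divide_distrib add_divide_distrib intro!: arg_cong[where f=g])
  finally show ?thesis .
qed

lemma g_in_crude:
  assumes "\<And>j. j \<le> k \<Longrightarrow> \<bar>g ((real i - real j) / real n - s)\<bar> \<le> B"
  shows "\<bar>g_in g k i n s\<bar> \<le> 2^k * B"
proof -
  have "\<bar>g_in g k i n s\<bar> \<le> (\<Sum>j=0..k. \<bar>(-1) ^ j * real (k choose j) * g ((real i - real j) / real n - s)\<bar>)"
    unfolding g_in_def by (rule sum_abs)
  also have "\<dots> \<le> (\<Sum>j=0..k. real (k choose j) * B)"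
    using assms by (intro sum_mono) (simp add: abs_mult mult_left_mono)
  also have "\<dots> = 2^k * B"
    using choose_row_sum[of k] by (simp add: sum_distrib_right[symmetric] atLeast0AtMost flip: of_nat_sum)
  finally show ?thesis .
qed

lemma g_in_taylor:
  assumes ki: "k \<le> i" and n: "n > 0"
    and der: "\<And>j t. j < k \<Longrightarrow> t > 0 \<Longrightarrow> ((deriv ^^ j) g has_real_derivative (deriv ^^ Suc j) g t) (at t)"
    and b: "(real i - real k) / real n - s > 0"
    and B: "\<And>y. (real i - real k) / real n - s \<le> y \<Longrightarrow> y \<le> (real i - real k) / real n - s + real k / real n \<Longrightarrow> \<bar>(deriv ^^ k) g y\<bar> \<le> B"
  shows "\<bar>g_in g k i n s\<bar> \<le> (1 / real n)^k * B"
proof -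
  have "\<bar>fdS k (\<lambda>t. (\<lambda>j. (deriv ^^ j) g) 0 ((real i - real k) / real n - s + real t * (1 / real n)))\<bar> \<le> (1 / real n)^k * B"
  proof (rule fd_bound)
    fix j y assume "j < k" "(real i - real k) / real n - s \<le> y" "y \<le> (real i - real k) / real n - s + real k * (1 / real n)"
    then show "((\<lambda>j. (deriv ^^ j) g) j has_real_derivative (\<lambda>j. (deriv ^^ j) g) (Suc j) y) (at y)"
      using b by (intro der) auto
  next
    fix y assume "(real i - real k) / real n - s \<le> y" "y \<le> (real i - real k) / real n - s + real k * (1 / real n)"
    then show "\<bar>(\<lambda>j. (deriv ^^ j) g) k y\<bar> \<le> B" by (intro B) auto
  qed simp
  then show ?thesis using g_in_fdS[OF ki, of g n s] by simp
qed

lemma cadlag_countable_jumps: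
  assumes f: "cadlag f"
  shows "countable {s. left_lim f s \<noteq> f s}"
proof -
  let ?S = "{s. left_lim f s \<noteq> f s}"
  have ll: "(f \<longlongrightarrow> left_lim f t) (at_left t)" for t
  proof -
    from f obtain l where l: "(f \<longlongrightarrow> l) (at_left t)" unfolding cadlag_def by blast
    then have "left_lim f t = l" unfolding left_lim_def by (intro tendsto_Lim) auto
    with l show ?thesis by simp
  qed
  have rc: "(f \<longlongrightarrow> f t) (at_right t)" for t
    using f unfolding cadlag_def continuous_within by auto
  have ex: "\<exists>p q r. p \<in> \<rat> \<and> q \<in> \<rat> \<and> r \<in> \<rat> \<and> p < t \<and> t < q \<and> 0 < r \<and> 3 * r < \<bar>left_lim f t - f t\<bar> \<and>
     (\<forall>u. p < u \<and> u < t \<longrightarrow> \<bar>f u - left_lim f t\<bar> < r) \<and> (\<forall>u. t \<le> u \<and> u < q \<longrightarrow> \<bar>f u - f t\<bar> < r)"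
    if "t \<in> ?S" for t
  proof -
    have d: "0 < \<bar>left_lim f t - f t\<bar>" using that by simp
    obtain r where r: "r \<in> \<rat>" "0 < r" "r < \<bar>left_lim f t - f t\<bar> / 3"
      using Rats_dense_in_real[of 0 "\<bar>left_lim f t - f t\<bar> / 3"] d by auto
    from ll[of t] r(2) have "eventually (\<lambda>u. dist (f u) (left_lim f t) < r) (at_left t)"
      by (rule tendstoD)
    then obtain b where b: "b < t" "\<forall>u>b. u < t \<longrightarrow> dist (f u) (left_lim f t) < r"
      unfolding eventually_at_left_field by blast
    obtain p where p: "p \<in> \<rat>" "b < p" "p < t" using Rats_dense_in_real[OF b(1)] by auto
    from rc[of t] r(2) have "eventually (\<lambda>u. dist (f u) (f t) < r) (at_right t)"
      by (rule tendstoD)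
    then obtain c where c: "t < c" "\<forall>u>t. u < c \<longrightarrow> dist (f u) (f t) < r"
      unfolding eventually_at_right_field by blast
    obtain q where q: "q \<in> \<rat>" "t < q" "q < c" using Rats_dense_in_real[OF c(1)] by auto
    show ?thesis
      apply (rule exI[of _ p], rule exI[of _ q], rule exI[of _ r])
      using p q r b c
      apply (auto simp: dist_real_def)
      subgoal for u by (cases "u = t") auto
      done
  qed
  define \<Phi> where "\<Phi> t p q r \<longleftrightarrow> p \<in> \<rat> \<and> q \<in> \<rat> \<and> r \<in> \<rat> \<and> p < t \<and> t < q \<and> 0 < r \<and> 3 * r < \<bar>left_lim f t - f t\<bar> \<and>
     (\<forall>u. p < u \<and> u < t \<longrightarrow> \<bar>f u - left_lim f t\<bar> < r) \<and> (\<forall>u. t \<le> u \<and> u < q \<longrightarrow> \<bar>f u - f t\<bar> < r)" for t p q r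
  define P where "P t = fst (SOME x. \<Phi> t (fst x) (fst (snd x)) (snd (snd x)))" for t
  define Q where "Q t = fst (snd (SOME x. \<Phi> t (fst x) (fst (snd x)) (snd (snd x))))" for t
  define R where "R t = snd (snd (SOME x. \<Phi> t (fst x) (fst (snd x)) (snd (snd x))))" for t
  have PQR0: "\<Phi> t (P t) (Q t) (R t)" if "t \<in> ?S" for t
  proof -
    from ex[OF that] obtain p q r where "\<Phi> t p q r" unfolding \<Phi>_def by blast
    then have "\<exists>x. \<Phi> t (fst x) (fst (snd x)) (snd (snd x))" by (intro exI[of _ "(p,q,r)"]) simp
    from someI_ex[OF this] show ?thesis unfolding P_def Q_def R_def .
  qed
  have PQR: "P t \<in> \<rat> \<and> Q t \<in> \<rat> \<and> R t \<in> \<rat> \<and> P t < t \<and> t < Q t \<and> 0 < R t \<and> 3 * R t < \<bar>left_lim f t - f t\<bar> \<and>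
     (\<forall>u. P t < u \<and> u < t \<longrightarrow> \<bar>f u - left_lim f t\<bar> < R t) \<and> (\<forall>u. t \<le> u \<and> u < Q t \<longrightarrow> \<bar>f u - f t\<bar> < R t)"
    if "t \<in> ?S" for t
    using PQR0[OF that] unfolding \<Phi>_def .
  define \<phi> where "\<phi> t = (P t, Q t, R t)" for t
  have "\<phi> ` ?S \<subseteq> \<rat> \<times> \<rat> \<times> \<rat>" using PQR by (auto simp: \<phi>_def)
  moreover have "countable (\<rat> \<times> \<rat> \<times> (\<rat>::real set))" by (intro countable_SIGMA countable_rat)
  ultimately have c: "countable (\<phi> ` ?S)" by (rule countable_subset)
  have key: "False" if "t \<in> ?S" "t' \<in> ?S" "t < t'" "\<phi> t = \<phi> t'" for t t'
  proof -
    have e: "P t = P t'" "Q t = Q t'" "R t = R t'" using that(4) by (auto simp: \<phi>_def)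
    from PQR[OF that(1)] have A1: "\<forall>u. t \<le> u \<and> u < Q t \<longrightarrow> \<bar>f u - f t\<bar> < R t" and A2: "t < Q t" by blast+
    from PQR[OF that(2)] have B1: "\<forall>u. P t' < u \<and> u < t' \<longrightarrow> \<bar>f u - left_lim f t'\<bar> < R t'"
      and B2: "P t' < t'" "t' < Q t'" and B3: "3 * R t' < \<bar>left_lim f t' - f t'\<bar>" by blast+
    from PQR[OF that(1)] have A3: "P t < t" by blast
    define u where "u = (t + t') / 2"
    have u: "t < u" "u < t'" using that(3) by (auto simp: u_def)
    have "\<bar>f u - f t\<bar> < R t" using A1 u B2 e by (metis less_imp_le order_less_trans)
    moreover have "\<bar>f u - left_lim f t'\<bar> < R t" using B1 u A3 e by (metis order_less_trans)
    moreover have "\<bar>f t' - f t\<bar> < R t" using A1 B2 e that(3) by (metis less_imp_le)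
    moreover have "3 * R t < \<bar>left_lim f t' - f t'\<bar>" using B3 e by simp
    ultimately show False by linarith
  qed
  have "inj_on \<phi> ?S"
    unfolding inj_on_def
  proof (intro ballI impI)
    fix t t' assume "t \<in> ?S" "t' \<in> ?S" "\<phi> t = \<phi> t'"
    then show "t = t'" using key[of t t'] key[of t' t] by (cases t t' rule: linorder_cases) auto
  qed
  from countable_image_inj_on[OF c this] show ?thesis .
qed

lemma cadlag_joint_measurable:
  fixes \<sigma> :: "real \<Rightarrow> 'w \<Rightarrow> real"
  assumes meas: "\<And>t. \<sigma> t \<in> borel_measurable M"
    and cad: "\<And>\<omega>. \<omega> \<in> space M \<Longrightarrow> cadlag (\<lambda>t. \<sigma> t \<omega>)"
  shows "(\<lambda>x. \<sigma> (snd x) (fst x)) \<in> borel_measurable (M \<Otimes>\<^sub>M (lborel :: real measure))"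
proof (rule borel_measurable_LIMSEQ_real)
  fix m :: nat
  show "(\<lambda>x. \<sigma> (real_of_int \<lceil>real (Suc m) * snd x\<rceil> / real (Suc m)) (fst x)) \<in> borel_measurable (M \<Otimes>\<^sub>M lborel)"
  proof (rule measurable_compose_countable[where f = "\<lambda>i x. \<sigma> (real_of_int i / real (Suc m)) (fst x)"])
    fix i :: int
    show "(\<lambda>x. \<sigma> (real_of_int i / real (Suc m)) (fst x)) \<in> borel_measurable (M \<Otimes>\<^sub>M lborel)"
      using measurable_compose[OF measurable_fst meas] by simp
  next
    show "(\<lambda>x. \<lceil>real (Suc m) * snd x\<rceil>) \<in> measurable (M \<Otimes>\<^sub>M lborel) (count_space UNIV)"
    proof -
      have "(\<lambda>x. real (Suc m) * snd x) \<in> borel_measurable (M \<Otimes>\<^sub>M lborel)"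
        by (intro borel_measurable_times borel_measurable_const)
           (simp add: measurable_snd'' measurable_ident_sets)
      from measurable_compose[OF this measurable_real_ceiling] show ?thesis by simp
    qed
  qed
next
  fix x :: "'w \<times> real" assume x: "x \<in> space (M \<Otimes>\<^sub>M lborel)"
  then have "fst x \<in> space M" by (auto simp: space_pair_measure)
  then have rc: "continuous (at_right (snd x)) (\<lambda>t. \<sigma> t (fst x))"
    using cad unfolding cadlag_def by blast
  let ?y = "\<lambda>m::nat. real_of_int \<lceil>real (Suc m) * snd x\<rceil> / real (Suc m)"
  have lo: "snd x \<le> ?y m" for m
    by (simp add: field_simps le_of_int_ceiling)
  have hi: "?y m \<le> snd x + 1 / real (Suc m)" for m
  proof -
    have "real_of_int \<lceil>real (Suc m) * snd x\<rceil> \<le> real (Suc m) * snd x + 1"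
      by linarith
    then have "real_of_int \<lceil>real (Suc m) * snd x\<rceil> / real (Suc m) \<le> (real (Suc m) * snd x + 1) / real (Suc m)"
      by (intro divide_right_mono) auto
    also have "\<dots> = snd x + 1 / real (Suc m)" by (simp add: add_divide_distrib)
    finally show ?thesis .
  qed
  have "(\<lambda>m. snd x + 1 / real (Suc m)) \<longlonglongrightarrow> snd x + 0"
  proof (intro tendsto_add tendsto_const)
    show "(\<lambda>m. 1 / real (Suc m)) \<longlonglongrightarrow> 0"
      using LIMSEQ_inverse_real_of_nat by (simp only: inverse_eq_divide)
  qed
  then have lim2: "(\<lambda>m. snd x + 1 / real (Suc m)) \<longlonglongrightarrow> snd x" by simp
  have ylim: "?y \<longlonglongrightarrow> snd x"
    by (rule tendsto_sandwich[OF always_eventually always_eventually tendsto_const lim2]) (use lo hi in blast)+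
  have cw: "continuous (at (snd x) within {snd x..}) (\<lambda>t. \<sigma> t (fst x))"
    using rc by (simp add: at_within_Ici_at_right)
  show "(\<lambda>m. \<sigma> (?y m) (fst x)) \<longlonglongrightarrow> \<sigma> (snd x) (fst x)"
    by (rule continuous_within_tendsto_compose'[OF cw _ ylim]) (use lo in auto)
qed



lemma pw_div: fixes c n r :: real shows "0 \<le> c \<Longrightarrow> 0 < n \<Longrightarrow> (c / n) powr r = c powr r * n powr (-r)"
  by (simp add: powr_divide powr_minus_divide)

lemma pw_inv_pow: fixes n b :: real shows "0 < n \<Longrightarrow> ((1/n)^k) powr b = n powr (- (real k * b))"
proof -
  assume n: "0 < n"
  have "(1/n)^k = n powr (- real k)"
    using n by (simp add: powr_minus_divide powr_realpow power_one_over)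
  then show ?thesis using n by (simp add: powr_powr)
qed

lemma pw1: fixes n :: real and Z a b :: real
  assumes n: "0 < n" "0 \<le> Z" "0 \<le> b" "0 \<le> kk"
  shows "(Z * (kk / n) powr a) powr b = (Z * kk powr a) powr b * n powr (- (a * b))"
proof -
  have "(Z * (kk / n) powr a) powr b = ((Z * kk powr a) * n powr (-a)) powr b"
    using n by (simp add: pw_div mult.assoc)
  also have "\<dots> = (Z * kk powr a) powr b * n powr (- (a * b))"
    using n by (simp add: powr_mult powr_powr)
  finally show ?thesis .
qed

lemma pw2: fixes n x C q b :: real
  assumes "n > 0" "x > 0" "C \<ge> 0"
  shows "((1/n)^k * (C * (x/2) powr q)) powr b = (C * (1/2) powr q) powr b * n powr (-(real k*b)) * x powr (q*b)"
proof -
  have "(1/n)^k * (C * (x/2) powr q) = ((1/n)^k) * (C * (1/2) powr q) * x powr q"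
    using assms by (simp add: powr_divide)
  also have "(\<dots>) powr b = ((1/n)^k) powr b * (C * (1/2) powr q) powr b * (x powr q) powr b"
    using assms by (simp add: powr_mult)
  also have "\<dots> = (C * (1/2) powr q) powr b * n powr (-(real k*b)) * x powr (q*b)"
    using assms by (simp add: pw_inv_pow powr_powr)
  finally show ?thesis .
qed

lemma nn_integral_reflect:
  fixes H :: "real \<Rightarrow> ennreal"
  assumes "H \<in> borel_measurable borel"
  shows "(\<integral>\<^sup>+ s. H (c - s) \<partial>lborel) = (\<integral>\<^sup>+ x. H x \<partial>lborel)"
proof -
  have "(\<integral>\<^sup>+ x. H x \<partial>lborel) = ennreal \<bar>-1\<bar> * (\<integral>\<^sup>+ x. H (c + -1 * x) \<partial>lborel)"
    by (rule nn_integral_real_affine) (use assms in simp_all)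
  then show ?thesis by simp
qed

lemma first_integral:
  fixes n kk Z1 Z2 e1 e2 p :: real
  assumes n: "n > 0" and kk: "kk > 0" and Z: "Z1 \<ge> 0" "Z2 \<ge> 0" and p: "p < -1"
  shows "(\<integral>\<^sup>+ x. ennreal (Z1 * n powr (-e1)) * indicator {0..kk/n} x
            + ennreal (Z2 * n powr (-e2) * x powr p) * indicator {kk/n..} x \<partial>lborel)
         = ennreal (Z1 * kk * n powr (-e1 - 1) + Z2 * (-(kk powr (p+1))/(p+1)) * n powr (-e2 - p - 1))"
proof -
  have a: "kk / n > 0" using n kk by simp
  have i1: "(\<integral>\<^sup>+ x. ennreal (Z1 * n powr (-e1)) * indicator {0..kk/n} x \<partial>lborel) = ennreal (Z1 * kk * n powr (-e1 - 1))"
  proof -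
    have "(\<integral>\<^sup>+ x. ennreal (Z1 * n powr (-e1)) * indicator {0..kk/n} x \<partial>lborel)
        = ennreal (Z1 * n powr (-e1)) * ennreal (kk / n)"
      using a by (simp add: nn_integral_cmult_indicator)
    also have "\<dots> = ennreal (Z1 * n powr (-e1) * (kk / n))" using Z n a by (subst ennreal_mult) auto
    also have "Z1 * n powr (-e1) * (kk / n) = Z1 * kk * n powr (-e1 - 1)"
      using n by (simp add: powr_diff powr_minus_divide field_simps)
    finally show ?thesis .
  qed
  have hi: "((\<lambda>x. Z2 * n powr (-e2) * x powr p) has_integral (Z2 * n powr (-e2) * (-((kk/n) powr (p+1)) / (p+1)))) {kk/n..}"
    by (intro has_integral_mult_right has_integral_powr_to_inf p a)
  have i2: "(\<integral>\<^sup>+ x. ennreal (Z2 * n powr (-e2) * x powr p) * indicator {kk/n..} x \<partial>lborel)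
      = ennreal (Z2 * (-(kk powr (p+1))/(p+1)) * n powr (-e2 - p - 1))"
  proof -
    have "(\<integral>\<^sup>+ x. ennreal (Z2 * n powr (-e2) * x powr p) * indicator {kk/n..} x \<partial>lborel)
        = ennreal (Z2 * n powr (-e2) * (-((kk/n) powr (p+1)) / (p+1)))"
      by (rule nn_integral_has_integral_lebesgue'[OF _ hi]) (use Z in simp)
    also have "Z2 * n powr (-e2) * (-((kk/n) powr (p+1)) / (p+1)) = Z2 * (-(kk powr (p+1))/(p+1)) * n powr (-e2 - p - 1)"
      using n kk by (simp add: pw_div powr_diff powr_minus_divide powr_add field_simps)
    finally show ?thesis .
  qed
  have "(\<integral>\<^sup>+ x. ennreal (Z1 * n powr (-e1)) * indicator {0..kk/n} x
            + ennreal (Z2 * n powr (-e2) * x powr p) * indicator {kk/n..} x \<partial>lborel)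
     = (\<integral>\<^sup>+ x. ennreal (Z1 * n powr (-e1)) * indicator {0..kk/n} x \<partial>lborel)
       + (\<integral>\<^sup>+ x. ennreal (Z2 * n powr (-e2) * x powr p) * indicator {kk/n..} x \<partial>lborel)"
    by (rule nn_integral_add) auto
  also have "\<dots> = ennreal (Z1 * kk * n powr (-e1 - 1) + Z2 * (-(kk powr (p+1))/(p+1)) * n powr (-e2 - p - 1))"
    unfolding i1 i2
  proof (rule ennreal_plus[symmetric])
    show "0 \<le> Z1 * kk * n powr (-e1 - 1)" using Z kk by simp
    have "kk powr (p+1) / (p+1) \<le> 0" using p by (intro divide_nonneg_neg) auto
    then have "-(kk powr (p+1))/(p+1) \<ge> 0" by simp
    then show "0 \<le> Z2 * (-(kk powr (p+1))/(p+1)) * n powr (-e2 - p - 1)" using Z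
      by (intro mult_nonneg_nonneg) auto
  qed
  finally show ?thesis .
qed


theorem lemma4p10:
  fixes M :: "'w measure" and \<sigma> :: "real \<Rightarrow> 'w \<Rightarrow> real" and g :: "real \<Rightarrow> real"
    and \<alpha> \<beta> c0 \<delta> :: real and k :: nat
  assumes M: "prob_space M"
    and beta: "0 < \<beta>" "\<beta> < 2"
    and sigma_meas: "\<And>t. \<sigma> t \<in> borel_measurable M"
    and sigma_cadlag: "\<And>\<omega>. \<omega> \<in> space M \<Longrightarrow> cadlag (\<lambda>t. \<sigma> t \<omega>)"
    and sigma_bdd: "\<exists>K. \<forall>t\<ge>-\<delta>. \<forall>\<omega>\<in>space M. \<bar>\<sigma> t \<omega>\<bar> \<le> K"
    and delta: "\<delta> > 0"
    and alpha: "\<alpha> > 0" and c0: "c0 \<noteq> 0"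
    and g_neg: "\<And>t. t < 0 \<Longrightarrow> g t = 0"
    and g_asymp: "g \<sim>[at_right 0] (\<lambda>t. c0 * t powr \<alpha>)"
    and g_diff: "\<And>j t. j < k \<Longrightarrow> t > 0 \<Longrightarrow>
                   ((deriv ^^ j) g has_real_derivative (deriv ^^ Suc j) g t) (at t)"
    and g_cont: "continuous_on {0<..} ((deriv ^^ k) g)"
    and g_k_near0: "\<exists>C. \<forall>t\<in>{0<..<\<delta>}. \<bar>(deriv ^^ k) g t\<bar> \<le> C * t powr (\<alpha> - real k)"
    and g1_int: "set_integrable lborel {\<delta><..} (\<lambda>t. \<bar>deriv g t\<bar> powr \<beta>)"
    and gk_int: "set_integrable lborel {\<delta><..} (\<lambda>t. \<bar>(deriv ^^ k) g t\<bar> powr \<beta>)"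
    and g1_decr: "\<And>x y. \<delta> < x \<Longrightarrow> x \<le> y \<Longrightarrow> \<bar>deriv g y\<bar> \<le> \<bar>deriv g x\<bar>"
    and gk_decr: "\<And>x y. \<delta> < x \<Longrightarrow> x \<le> y \<Longrightarrow> \<bar>(deriv ^^ k) g y\<bar> \<le> \<bar>(deriv ^^ k) g x\<bar>"
    and moment: "(\<integral>\<^sup>+ \<omega>. (\<integral>\<^sup>+ s. ennreal (\<bar>(deriv ^^ k) g (- s) * \<sigma> s \<omega>\<bar> powr \<beta>)
                    * indicator {..-\<delta>} s \<partial>lborel) \<partial>M) < \<infinity>"
    and k_large: "\<alpha> + 1 / \<beta> < real k"
  shows "\<forall>\<epsilon>. 0 < \<epsilon> \<and> \<epsilon> \<le> \<delta> \<longrightarrow> (\<exists>C>0. \<forall>n i. k \<le> i \<and> i \<le> n \<longrightarrow>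
           ((\<integral>\<^sup>+ \<omega>. (\<integral>\<^sup>+ s. ennreal (\<bar>g_in g k i n s * left_lim (\<lambda>u. \<sigma> u \<omega>) s\<bar> powr \<beta>)
                 * indicator {real i / real n - \<epsilon> .. real i / real n} s \<partial>lborel) \<partial>M)
            + (\<integral>\<^sup>+ s. ennreal (\<bar>g_in g k i n s\<bar> powr \<beta>)
                 * indicator {real i / real n - \<epsilon> .. real i / real n} s \<partial>lborel)
            \<le> ennreal (C * real n powr (- \<alpha> * \<beta> - 1)))
         \<and> ((\<integral>\<^sup>+ \<omega>. (\<integral>\<^sup>+ s. ennreal (\<bar>g_in g k i n s * left_lim (\<lambda>u. \<sigma> u \<omega>) s\<bar> powr \<beta>)
                 * indicator {.. real i / real n - \<epsilon>} s \<partial>lborel) \<partial>M)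
            + (\<integral>\<^sup>+ s. ennreal (\<bar>g_in g k i n s\<bar> powr \<beta>)
                 * indicator {.. real i / real n - \<epsilon>} s \<partial>lborel)
            \<le> ennreal (C * real n powr (- real k * \<beta>))))"
proof -
  interpret P: prob_space M by (rule M)
  define D where "D = (deriv ^^ k) g"
  have k_pos: "real k > 0"
  proof -
    have "0 < \<alpha> + 1 / \<beta>" using alpha beta by (intro add_pos_pos) auto
    then show ?thesis using k_large by linarith
  qed
  then have k1: "k \<ge> 1" by simp
  have pexp: "(\<alpha> - real k) * \<beta> < -1"
  proof -
    have "1 / \<beta> < real k - \<alpha>" using k_large by simp
    then have "1 < (real k - \<alpha>) * \<beta>" using beta by (simp add: field_simps)
    then show ?thesis by (simp add: algebra_simps)
  qed
  have ak: "\<alpha> \<le> real k"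
  proof -
    have "0 < 1 / \<beta>" using beta by simp
    then show ?thesis using k_large by linarith
  qed
  have der: "\<And>j t. j < k \<Longrightarrow> t > 0 \<Longrightarrow> ((deriv ^^ j) g has_real_derivative (deriv ^^ Suc j) g t) (at t)"
    by (rule g_diff)
  have gcont: "isCont g t" if "t > 0" for t
    using g_diff[of 0 t] k1 that by (auto intro: DERIV_isCont)
  have gcont_on: "continuous_on A g" if "A \<subseteq> {0<..}" for A
    using gcont that by (intro continuous_at_imp_continuous_on) auto
  have Dcont: "continuous_on A D" if "A \<subseteq> {0<..}" for A
    using g_cont that unfolding D_def by (rule continuous_on_subset)
  define R where "R = real (2 * k) + 1 + \<delta>"
  have R_pos: "R > 0" using delta by (simp add: R_def)
  obtain C1 where C1: "C1 > 0" "\<And>y. 0 < y \<Longrightarrow> y \<le> R \<Longrightarrow> \<bar>g y\<bar> \<le> C1 * y powr \<alpha>"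
  proof -
    from asymp_equiv_imp_bigo[OF g_asymp] obtain c where c: "c > 0"
      "eventually (\<lambda>x. norm (g x) \<le> c * norm (c0 * x powr \<alpha>)) (at_right 0)"
      by (elim landau_o.bigE)
    then obtain \<eta> where \<eta>: "\<eta> > 0" "\<And>x. 0 < x \<Longrightarrow> x < \<eta> \<Longrightarrow> \<bar>g x\<bar> \<le> c * (\<bar>c0\<bar> * x powr \<alpha>)"
      unfolding eventually_at_right_field by (auto simp: abs_mult)
    obtain Mg where Mg: "Mg \<ge> 0" "\<And>x. x \<in> {\<eta>/2..R} \<Longrightarrow> norm (g x) \<le> Mg"
    proof -
      have "{\<eta>/2..R} \<subseteq> {0<..}" using \<eta>(1) by auto
      from continuous_on_compact_bound[OF compact_Icc gcont_on[OF this]] that show ?thesis by blast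
    qed
    define C where "C = c * \<bar>c0\<bar> + Mg / (\<eta>/2) powr \<alpha> + 1"
    have Cpos: "C > 0" using c \<eta> Mg by (simp add: C_def add_nonneg_pos)
    show ?thesis
    proof (rule that[of C, OF Cpos])
      fix y assume y: "0 < y" "y \<le> R"
      show "\<bar>g y\<bar> \<le> C * y powr \<alpha>"
      proof (cases "y < \<eta>")
        case True
        then have "\<bar>g y\<bar> \<le> c * \<bar>c0\<bar> * y powr \<alpha>" using \<eta> y by (simp add: mult.assoc)
        also have "\<dots> \<le> C * y powr \<alpha>"
          using Mg \<eta> by (intro mult_right_mono) (auto simp: C_def)
        finally show ?thesis .
      next
        case False
        then have "\<bar>g y\<bar> \<le> Mg" using Mg(2)[of y] y \<eta> by auto
        also have "Mg = Mg / (\<eta>/2) powr \<alpha> * (\<eta>/2) powr \<alpha>" using \<eta> by simp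
        also have "\<dots> \<le> Mg / (\<eta>/2) powr \<alpha> * y powr \<alpha>"
          using False \<eta> alpha Mg by (intro mult_left_mono powr_mono2) auto
        also have "\<dots> \<le> C * y powr \<alpha>"
          using c \<eta> by (intro mult_right_mono) (auto simp: C_def)
        finally show ?thesis .
      qed
    qed
  qed
  obtain C2 where C2: "C2 > 0" "\<And>y. 0 < y \<Longrightarrow> y \<le> \<delta> \<Longrightarrow> \<bar>D y\<bar> \<le> C2 * y powr (\<alpha> - real k)"
  proof -
    from g_k_near0 obtain C where C: "\<And>t. t\<in>{0<..<\<delta>} \<Longrightarrow> \<bar>D t\<bar> \<le> C * t powr (\<alpha> - real k)"
      unfolding D_def by blast
    define C' where "C' = max C 0 + \<bar>D \<delta>\<bar> / \<delta> powr (\<alpha> - real k) + 1"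
    have nn: "0 \<le> \<bar>D \<delta>\<bar> / \<delta> powr (\<alpha> - real k)" by simp
    have "C' > 0" unfolding C'_def using nn by linarith
    then show ?thesis
    proof (rule that)
      fix y assume y: "0 < y" "y \<le> \<delta>"
      show "\<bar>D y\<bar> \<le> C' * y powr (\<alpha> - real k)"
      proof (cases "y < \<delta>")
        case True
        then have "\<bar>D y\<bar> \<le> C * y powr (\<alpha> - real k)" using C y by auto
        also have "\<dots> \<le> C' * y powr (\<alpha> - real k)"
          using nn unfolding C'_def by (intro mult_right_mono) (linarith, simp)
        finally show ?thesis .
      next
        case False
        then have yd: "y = \<delta>" using y by simp
        have "\<bar>D y\<bar> = \<bar>D \<delta>\<bar> / \<delta> powr (\<alpha> - real k) * y powr (\<alpha> - real k)" using yd delta by simp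
        also have "\<dots> \<le> C' * y powr (\<alpha> - real k)"
          using nn unfolding C'_def by (intro mult_right_mono) (linarith, simp)
        finally show ?thesis .
      qed
    qed
  qed
  obtain K where K: "K \<ge> 0" "\<And>t \<omega>. t \<ge> -\<delta> \<Longrightarrow> \<omega> \<in> space M \<Longrightarrow> \<bar>\<sigma> t \<omega>\<bar> \<le> K"
  proof -
    from sigma_bdd obtain K0 where "\<forall>t\<ge>-\<delta>. \<forall>\<omega>\<in>space M. \<bar>\<sigma> t \<omega>\<bar> \<le> K0" by blast
    then show ?thesis by (intro that[of "max K0 0"]) (auto simp: le_max_iff_disj)
  qed
  have LLbd: "\<bar>left_lim (\<lambda>u. \<sigma> u \<omega>) s\<bar> \<le> K" if "\<omega> \<in> space M" "s > -\<delta>" for \<omega> s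
  proof -
    from sigma_cadlag[OF that(1)] obtain l where l: "((\<lambda>u. \<sigma> u \<omega>) \<longlongrightarrow> l) (at_left s)"
      unfolding cadlag_def by blast
    then have ll: "left_lim (\<lambda>u. \<sigma> u \<omega>) s = l" unfolding left_lim_def by (intro tendsto_Lim) auto
    have ev: "eventually (\<lambda>u. \<bar>\<sigma> u \<omega>\<bar> \<le> K) (at_left s)"
      unfolding eventually_at_left_field using that K by (intro exI[of _ "-\<delta>"]) auto
    have "\<bar>l\<bar> \<le> K" by (rule tendsto_upperbound[OF tendsto_rabs[OF l] ev]) simp
    with ll show ?thesis by simp
  qed
  have AEjump: "AE s in lborel. left_lim (\<lambda>u. \<sigma> u \<omega>) s = \<sigma> s \<omega>" if "\<omega> \<in> space M" for \<omega>
  proof -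
    have "countable {s. left_lim (\<lambda>u. \<sigma> u \<omega>) s \<noteq> \<sigma> s \<omega>}"
      by (rule cadlag_countable_jumps[OF sigma_cadlag[OF that]])
    from AE_not_in[OF countable_imp_null_set_lborel[OF this]] show ?thesis by auto
  qed
  have JM: "(\<lambda>x. \<sigma> (snd x) (fst x)) \<in> borel_measurable (M \<Otimes>\<^sub>M (lborel :: real measure))"
    by (rule cadlag_joint_measurable[OF sigma_meas sigma_cadlag])
  \<comment> \<open>measurable version of D(-s)\<close>
  define E where "E s = indicator {0<..} (-s) * D (-s)" for s :: real
  have E_meas: "E \<in> borel_measurable borel"
  proof -
    have "(\<lambda>x. indicator {0<..} x *\<^sub>R D x) \<in> borel_measurable borel"
      by (rule borel_measurable_continuous_on_indicator) (auto intro: Dcont)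
    from measurable_compose[OF borel_measurable_uminus[OF measurable_ident_sets[OF refl]] this]
    show ?thesis by (simp add: E_def[abs_def] comp_def)
  qed
  have E_eq: "E s = D (-s)" if "s \<le> -\<delta>" for s using that delta by (simp add: E_def)
  define Y where "Y \<omega> s = ennreal (\<bar>E s * \<sigma> s \<omega>\<bar> powr \<beta>) * indicator {..-\<delta>} s" for \<omega> s
  have Y_meas: "(\<lambda>x. Y (fst x) (snd x)) \<in> borel_measurable (M \<Otimes>\<^sub>M (lborel :: real measure))"
    unfolding Y_def
  proof (intro borel_measurable_times_ennreal measurable_compose[OF _ measurable_ennreal]
          measurable_abs_powr borel_measurable_times JM)
    show "(\<lambda>x. E (snd x)) \<in> borel_measurable (M \<Otimes>\<^sub>M (lborel :: real measure))"
      by (rule measurable_compose[OF measurable_snd E_meas[folded measurable_lborel2]])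
    show "(\<lambda>x. indicator {..-\<delta>} (snd x) :: ennreal) \<in> borel_measurable (M \<Otimes>\<^sub>M (lborel :: real measure))"
      by (rule measurable_compose[OF measurable_snd borel_measurable_indicator]) simp
  qed
  have Y_sec: "Y \<omega> \<in> borel_measurable lborel" if "\<omega> \<in> space M" for \<omega>
    using measurable_Pair2[OF Y_meas that] by simp
  define X where "X \<omega> = (\<integral>\<^sup>+ s. Y \<omega> s \<partial>lborel)" for \<omega>
  have X_meas: "X \<in> borel_measurable M"
    unfolding X_def using lborel.borel_measurable_nn_integral[of "\<lambda>\<omega> s. Y \<omega> s" M] Y_meas
    by (simp add: split_beta')
  have X_eq: "X \<omega> = (\<integral>\<^sup>+ s. ennreal (\<bar>(deriv ^^ k) g (- s) * \<sigma> s \<omega>\<bar> powr \<beta>) * indicator {..-\<delta>} s \<partial>lborel)" for \<omega>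
    unfolding X_def Y_def by (intro nn_integral_cong) (auto simp: E_eq D_def indicator_def)
  obtain Xr where Xr: "Xr \<ge> 0" "(\<integral>\<^sup>+ \<omega>. X \<omega> \<partial>M) = ennreal Xr"
  proof -
    have "(\<integral>\<^sup>+ \<omega>. X \<omega> \<partial>M) < \<infinity>" using moment by (simp only: X_eq)
    then show ?thesis using that unfolding less_top_ennreal[symmetric] by (auto simp: less_top_ennreal)
  qed
  define FJ where "FJ t = indicator {\<delta><..} t * \<bar>D t\<bar> powr \<beta>" for t :: real
  have FJ_int: "integrable lborel FJ"
    using gk_int unfolding set_integrable_def FJ_def D_def by simp
  have FJ_meas: "FJ \<in> borel_measurable borel" using borel_measurable_integrable[OF FJ_int] by simp
  have FJ_nn: "FJ t \<ge> 0" for t by (simp add: FJ_def)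
  obtain Jr where Jr: "Jr \<ge> 0" "(\<integral>\<^sup>+ s. ennreal (FJ (- s)) \<partial>lborel) = ennreal Jr"
  proof -
    have "(\<integral>\<^sup>+ t. ennreal (FJ t) \<partial>lborel) = ennreal \<bar>-1\<bar> * (\<integral>\<^sup>+ s. ennreal (FJ (0 + -1 * s)) \<partial>lborel)"
      by (rule nn_integral_real_affine) (use FJ_meas in simp_all)
    then have eq: "(\<integral>\<^sup>+ s. ennreal (FJ (- s)) \<partial>lborel) = (\<integral>\<^sup>+ t. ennreal (FJ t) \<partial>lborel)" by simp
    have "(\<integral>\<^sup>+ t. ennreal (FJ t) \<partial>lborel) < \<infinity>"
      using integrableD(2)[OF FJ_int] by (simp add: top.not_eq_extremum)
    then have "(\<integral>\<^sup>+ s. ennreal (FJ (- s)) \<partial>lborel) < \<infinity>" by (simp only: eq)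
    then show ?thesis using that by (auto simp: less_top_ennreal)
  qed
  have Q1: "\<bar>g_in g k i n s\<bar> \<le> (1 / real n)^k * \<bar>D (-s)\<bar>"
    if ki: "k \<le> i" "i \<le> n" and s: "s < -\<delta>" for n i s
  proof -
    have n: "n > 0" using ki k1 by simp
    have ik: "real i - real k \<ge> 0" using ki by simp
    then have ik': "(real i - real k) / real n \<ge> 0" using n by simp
    show ?thesis
    proof (rule g_in_taylor[OF ki(1) n der])
      show "(real i - real k) / real n - s > 0" using ik' s delta by linarith
      fix y assume y: "(real i - real k) / real n - s \<le> y"
      then have "-s \<le> y" using ik' by linarith
      then show "\<bar>(deriv ^^ k) g y\<bar> \<le> \<bar>D (- s)\<bar>" unfolding D_def using s
        by (intro gk_decr) auto
    qed
  qed
  have P1: "\<bar>g_in g k i n s\<bar> \<le> 2^k * (C1 * (2 * real k / real n) powr \<alpha>)"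
    if ki: "k \<le> i" "i \<le> n" and x: "0 \<le> real i / real n - s" "real i / real n - s \<le> 2 * real k / real n"
      and sE: "s \<notin> (\<lambda>j. (real i - real j) / real n) ` {0..k}" for n i s
  proof (rule g_in_crude)
    have n: "n > 0" using ki k1 by simp
    fix j assume j: "j \<le> k"
    define a where "a = (real i - real j) / real n - s"
    have a_le: "a \<le> real i / real n - s" using n by (simp add: a_def diff_divide_distrib)
    have "a \<noteq> 0" using sE j by (auto simp: a_def)
    have "\<bar>g a\<bar> \<le> C1 * (2 * real k / real n) powr \<alpha>"
    proof (cases "a < 0")
      case True then show ?thesis using g_neg C1 by simp
    next
      case False
      with \<open>a \<noteq> 0\<close> have ap: "a > 0" by simp
      have "real k * 1 \<le> real k * real n" using n by (intro mult_left_mono) auto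
      then have "2 * real k / real n \<le> 2 * real k" using n by (simp add: divide_le_eq)
      then have "a \<le> R" using a_le x unfolding R_def using delta by simp
      then have "\<bar>g a\<bar> \<le> C1 * a powr \<alpha>" using C1 ap by simp
      also have "\<dots> \<le> C1 * (2 * real k / real n) powr \<alpha>"
        using C1 ap a_le x alpha by (intro mult_left_mono powr_mono2) auto
      finally show ?thesis .
    qed
    then show "\<bar>g ((real i - real j) / real n - s)\<bar> \<le> C1 * (2 * real k / real n) powr \<alpha>"
      by (simp add: a_def)
  qed
  have P2: "\<bar>g_in g k i n s\<bar> \<le> (1 / real n)^k * (C2 * ((real i / real n - s) / 2) powr (\<alpha> - real k))"
    if ki: "k \<le> i" "i \<le> n" and x: "2 * real k / real n \<le> real i / real n - s" "real i / real n - s \<le> \<delta>" for n i s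
  proof -
    have n: "n > 0" using ki k1 by simp
    define x where "x = real i / real n - s"
    have b: "(real i - real k) / real n - s = x - real k / real n"
      by (simp add: x_def diff_divide_distrib)
    have kn: "real k / real n > 0" using n k1 by simp
    have x2k: "x \<ge> 2 * (real k / real n)" using x unfolding x_def by simp
    then have x2: "x - real k / real n \<ge> x / 2" by linarith
    show ?thesis
    proof (rule g_in_taylor[OF ki(1) n der])
      show "(real i - real k) / real n - s > 0" unfolding b using x2k kn by linarith
      fix y assume y: "(real i - real k) / real n - s \<le> y" "y \<le> (real i - real k) / real n - s + real k / real n"
      then have y1: "x / 2 \<le> y" "y \<le> x" using x2 unfolding b by linarith+
      have xp: "x / 2 > 0" using x2k kn by linarith
      have "\<bar>(deriv ^^ k) g y\<bar> \<le> C2 * y powr (\<alpha> - real k)" unfolding D_def[symmetric]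
        using C2(2)[of y] y1 xp x(2) unfolding x_def by linarith
      also have "\<dots> \<le> C2 * (x / 2) powr (\<alpha> - real k)"
        using C2(1) y1 xp ak by (intro mult_left_mono powr_mono2') auto
      finally show "\<bar>(deriv ^^ k) g y\<bar> \<le> C2 * ((real i / real n - s) / 2) powr (\<alpha> - real k)"
        unfolding x_def .
    qed
  qed
  define q where "q = \<alpha> - real k"
  have qb: "q * \<beta> < -1" using pexp by (simp add: q_def)
  define Z1 where "Z1 = (2^k * C1 * (2 * real k) powr \<alpha>) powr \<beta>"
  define Z2 where "Z2 = (C2 * (1/2) powr q) powr \<beta>"
  define H1 where "H1 n x = ennreal (Z1 * real n powr (-(\<alpha>*\<beta>))) * indicator {0..2*real k/real n} x
      + ennreal (Z2 * real n powr (-(real k*\<beta>)) * x powr (q*\<beta>)) * indicator {2*real k/real n..} x"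
    for n :: nat and x :: real
  define CF1 where "CF1 = Z1 * (2*real k) + Z2 * (-((2*real k) powr (q*\<beta>+1))/(q*\<beta>+1))"
  have Z1nn: "Z1 \<ge> 0" and Z2nn: "Z2 \<ge> 0" by (simp_all add: Z1_def Z2_def)
  have CF1nn: "CF1 \<ge> 0"
  proof -
    have "(2*real k) powr (q*\<beta>+1) / (q*\<beta>+1) \<le> 0" using qb by (intro divide_nonneg_neg) auto
    then show ?thesis unfolding CF1_def using Z1nn Z2nn by (intro add_nonneg_nonneg mult_nonneg_nonneg) auto
  qed
  have H1_meas: "H1 n \<in> borel_measurable borel" for n
    unfolding H1_def by measurable
  have H1_int: "(\<integral>\<^sup>+ s. H1 n (c - s) \<partial>lborel) = ennreal (CF1 * real n powr (- \<alpha> * \<beta> - 1))"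
    if n: "n > 0" for n c
  proof -
    have "(\<integral>\<^sup>+ s. H1 n (c - s) \<partial>lborel) = (\<integral>\<^sup>+ x. H1 n x \<partial>lborel)"
      by (rule nn_integral_reflect[OF H1_meas])
    also have "\<dots> = ennreal (Z1 * (2*real k) * real n powr (-(\<alpha>*\<beta>) - 1)
        + Z2 * (-((2*real k) powr (q*\<beta>+1))/(q*\<beta>+1)) * real n powr (-(real k*\<beta>) - q*\<beta> - 1))"
      unfolding H1_def using n k_pos by (intro first_integral Z1nn Z2nn qb) auto
    also have "\<dots> = ennreal (CF1 * real n powr (- \<alpha> * \<beta> - 1))"
      unfolding CF1_def q_def by (simp add: algebra_simps)
    finally show ?thesis .
  qed
  have PW1: "AE s in lborel. ennreal (\<bar>g_in g k i n s\<bar> powr \<beta>) * indicator {real i/real n - \<delta> .. real i/real n} s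
      \<le> H1 n (real i / real n - s)"
    if ki: "k \<le> i" "i \<le> n" for n i
  proof -
    have n: "n > 0" using ki k1 by simp
    have fin: "finite ((\<lambda>j. (real i - real j) / real n) ` {0..k})" by simp
    from AE_not_in[OF finite_imp_null_set_lborel[OF fin]]
    show ?thesis
    proof eventually_elim
      case (elim s)
      show ?case
      proof (cases "s \<in> {real i/real n - \<delta> .. real i/real n}")
        case False then show ?thesis by simp
      next
        case True
        define x where "x = real i / real n - s"
        have x0: "0 \<le> x" "x \<le> \<delta>" using True by (auto simp: x_def)
        show ?thesis
        proof (cases "x \<le> 2 * real k / real n")
          case True
          have "\<bar>g_in g k i n s\<bar> \<le> 2^k * (C1 * (2 * real k / real n) powr \<alpha>)"
            using P1[OF ki _ _ elim] x0 True unfolding x_def by simp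
          then have "\<bar>g_in g k i n s\<bar> powr \<beta> \<le> (2^k * (C1 * (2 * real k / real n) powr \<alpha>)) powr \<beta>"
            using beta by (intro powr_mono2) auto
          also have "\<dots> = (2^k * C1 * (2 * real k / real n) powr \<alpha>) powr \<beta>" by (simp add: mult.assoc)
          also have "\<dots> = Z1 * real n powr (-(\<alpha>*\<beta>))"
            unfolding Z1_def using n C1 beta by (intro pw1) auto
          finally have le: "\<bar>g_in g k i n s\<bar> powr \<beta> \<le> Z1 * real n powr (-(\<alpha>*\<beta>))" .
          have "ennreal (\<bar>g_in g k i n s\<bar> powr \<beta>) * indicator {real i/real n - \<delta> .. real i/real n} s
              \<le> ennreal (Z1 * real n powr (-(\<alpha>*\<beta>))) * indicator {0..2*real k/real n} x"
            using le True x0 \<open>s \<in> _\<close> by (simp add: ennreal_leI)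
          also have "\<dots> \<le> H1 n x" unfolding H1_def by simp
          finally show ?thesis by (simp add: x_def)
        next
          case False
          have xp: "x > 0" using False k_pos n x0
            by (metis divide_nonneg_pos less_eq_real_def mult_nonneg_nonneg not_le of_nat_0_less_iff zero_le_numeral)
          have "\<bar>g_in g k i n s\<bar> \<le> (1 / real n)^k * (C2 * ((real i / real n - s) / 2) powr (\<alpha> - real k))"
            using P2[OF ki] x0 False unfolding x_def by simp
          then have "\<bar>g_in g k i n s\<bar> powr \<beta> \<le> ((1 / real n)^k * (C2 * (x / 2) powr q)) powr \<beta>"
            using beta unfolding x_def q_def by (intro powr_mono2) auto
          also have "\<dots> = Z2 * real n powr (-(real k*\<beta>)) * x powr (q*\<beta>)"
            unfolding Z2_def using n xp C2 by (intro pw2) auto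
          finally have le: "\<bar>g_in g k i n s\<bar> powr \<beta> \<le> Z2 * real n powr (-(real k*\<beta>)) * x powr (q*\<beta>)" .
          have "ennreal (\<bar>g_in g k i n s\<bar> powr \<beta>) * indicator {real i/real n - \<delta> .. real i/real n} s
              \<le> ennreal (Z2 * real n powr (-(real k*\<beta>)) * x powr (q*\<beta>)) * indicator {2*real k/real n..} x"
            using le False x0 \<open>s \<in> _\<close> by (simp add: ennreal_leI)
          also have "\<dots> \<le> H1 n x" unfolding H1_def by simp
          finally show ?thesis by (simp add: x_def)
        qed
      qed
    qed
  qed
  have H1c_meas: "(\<lambda>s. H1 n (c - s)) \<in> borel_measurable lborel" for n c
    using measurable_compose[OF _ H1_meas[of n], of "\<lambda>s. c - s" lborel] by simp
  show ?thesis
  proof (intro allI impI)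
    fix \<epsilon> :: real assume eps: "0 < \<epsilon> \<and> \<epsilon> \<le> \<delta>"
    then have e0: "0 < \<epsilon>" and ed: "\<epsilon> \<le> \<delta>" by auto
    have F1: "(\<integral>\<^sup>+ \<omega>. (\<integral>\<^sup>+ s. ennreal (\<bar>g_in g k i n s * left_lim (\<lambda>u. \<sigma> u \<omega>) s\<bar> powr \<beta>)
                 * indicator {real i / real n - \<epsilon> .. real i / real n} s \<partial>lborel) \<partial>M)
            + (\<integral>\<^sup>+ s. ennreal (\<bar>g_in g k i n s\<bar> powr \<beta>)
                 * indicator {real i / real n - \<epsilon> .. real i / real n} s \<partial>lborel)
            \<le> ennreal ((K powr \<beta> + 1) * CF1 * real n powr (- \<alpha> * \<beta> - 1))"
      if ki: "k \<le> i" "i \<le> n" for n i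
    proof -
      have n: "n > 0" using ki k1 by simp
      have ipos: "real i / real n > 0" using ki k1 n by simp
      define A where "A = {real i / real n - \<epsilon> .. real i / real n}"
      define Ad where "Ad = {real i / real n - \<delta> .. real i / real n}"
      have AAd: "indicator A s \<le> (indicator Ad s :: ennreal)" for s
        using ed by (auto simp: A_def Ad_def indicator_def)
      define I where "I = ennreal (CF1 * real n powr (- \<alpha> * \<beta> - 1))"
      have PW: "AE s in lborel. ennreal (\<bar>g_in g k i n s\<bar> powr \<beta>) * indicator A s \<le> H1 n (real i / real n - s)"
        using PW1[OF ki] unfolding Ad_def[symmetric]
      proof eventually_elim
        case (elim s)
        have "ennreal (\<bar>g_in g k i n s\<bar> powr \<beta>) * indicator A s \<le> ennreal (\<bar>g_in g k i n s\<bar> powr \<beta>) * indicator Ad s"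
          by (intro mult_left_mono AAd) auto
        then show ?case using elim by (rule order_trans)
      qed
      have Det: "(\<integral>\<^sup>+ s. ennreal (\<bar>g_in g k i n s\<bar> powr \<beta>) * indicator A s \<partial>lborel) \<le> I"
      proof -
        have "(\<integral>\<^sup>+ s. ennreal (\<bar>g_in g k i n s\<bar> powr \<beta>) * indicator A s \<partial>lborel) \<le> (\<integral>\<^sup>+ s. H1 n (real i / real n - s) \<partial>lborel)"
          by (rule nn_integral_mono_AE[OF PW])
        also have "\<dots> = I" unfolding I_def by (rule H1_int[OF n])
        finally show ?thesis .
      qed
      have Sto: "(\<integral>\<^sup>+ s. ennreal (\<bar>g_in g k i n s * left_lim (\<lambda>u. \<sigma> u \<omega>) s\<bar> powr \<beta>) * indicator A s \<partial>lborel)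
          \<le> ennreal (K powr \<beta>) * I" if \<omega>: "\<omega> \<in> space M" for \<omega>
      proof -
        have "AE s in lborel. ennreal (\<bar>g_in g k i n s * left_lim (\<lambda>u. \<sigma> u \<omega>) s\<bar> powr \<beta>) * indicator A s
            \<le> ennreal (K powr \<beta>) * H1 n (real i / real n - s)"
          using PW
        proof eventually_elim
          case (elim s)
          show ?case
          proof (cases "s \<in> A")
            case False then show ?thesis by simp
          next
            case True
            then have "s > -\<delta>" using ipos ed unfolding A_def by auto
            then have LLb: "\<bar>left_lim (\<lambda>u. \<sigma> u \<omega>) s\<bar> \<le> K" by (rule LLbd[OF \<omega>])
            have "\<bar>g_in g k i n s * left_lim (\<lambda>u. \<sigma> u \<omega>) s\<bar> powr \<beta>
                = \<bar>left_lim (\<lambda>u. \<sigma> u \<omega>) s\<bar> powr \<beta> * \<bar>g_in g k i n s\<bar> powr \<beta>"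
              by (simp add: abs_mult powr_mult)
            also have "\<dots> \<le> K powr \<beta> * \<bar>g_in g k i n s\<bar> powr \<beta>"
              using LLb beta by (intro mult_right_mono powr_mono2) auto
            finally have "ennreal (\<bar>g_in g k i n s * left_lim (\<lambda>u. \<sigma> u \<omega>) s\<bar> powr \<beta>) * indicator A s
                \<le> ennreal (K powr \<beta>) * (ennreal (\<bar>g_in g k i n s\<bar> powr \<beta>) * indicator A s)"
              using True by (simp add: ennreal_mult[symmetric] ennreal_leI)
            also have "\<dots> \<le> ennreal (K powr \<beta>) * H1 n (real i / real n - s)"
              by (intro mult_left_mono elim) auto
            finally show ?thesis .
          qed
        qed
        then have "(\<integral>\<^sup>+ s. ennreal (\<bar>g_in g k i n s * left_lim (\<lambda>u. \<sigma> u \<omega>) s\<bar> powr \<beta>) * indicator A s \<partial>lborel)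
            \<le> (\<integral>\<^sup>+ s. ennreal (K powr \<beta>) * H1 n (real i / real n - s) \<partial>lborel)"
          by (rule nn_integral_mono_AE)
        also have "\<dots> = ennreal (K powr \<beta>) * (\<integral>\<^sup>+ s. H1 n (real i / real n - s) \<partial>lborel)"
          by (rule nn_integral_cmult[OF H1c_meas])
        also have "\<dots> = ennreal (K powr \<beta>) * I" unfolding I_def by (simp add: H1_int[OF n])
        finally show ?thesis .
      qed
      have "(\<integral>\<^sup>+ \<omega>. (\<integral>\<^sup>+ s. ennreal (\<bar>g_in g k i n s * left_lim (\<lambda>u. \<sigma> u \<omega>) s\<bar> powr \<beta>) * indicator A s \<partial>lborel) \<partial>M)
          \<le> (\<integral>\<^sup>+ \<omega>. ennreal (K powr \<beta>) * I \<partial>M)"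
        by (intro nn_integral_mono Sto)
      also have "\<dots> = ennreal (K powr \<beta>) * I" by (simp add: P.emeasure_space_1)
      finally have "(\<integral>\<^sup>+ \<omega>. (\<integral>\<^sup>+ s. ennreal (\<bar>g_in g k i n s * left_lim (\<lambda>u. \<sigma> u \<omega>) s\<bar> powr \<beta>) * indicator A s \<partial>lborel) \<partial>M)
          + (\<integral>\<^sup>+ s. ennreal (\<bar>g_in g k i n s\<bar> powr \<beta>) * indicator A s \<partial>lborel)
          \<le> ennreal (K powr \<beta>) * I + I"
        using Det by (rule add_mono)
      also have "\<dots> = ennreal ((K powr \<beta> + 1) * CF1 * real n powr (- \<alpha> * \<beta> - 1))"
        unfolding I_def using CF1nn
        by (simp add: ennreal_mult[symmetric] ennreal_plus[symmetric] algebra_simps del: ennreal_plus)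
      finally show ?thesis unfolding A_def .
    qed
    obtain Mk where Mk: "Mk \<ge> 0" "\<And>y. \<epsilon>/2 \<le> y \<Longrightarrow> y \<le> 1 + \<delta> \<Longrightarrow> \<bar>D y\<bar> \<le> Mk"
    proof -
      have "{\<epsilon>/2..1+\<delta>} \<subseteq> {0<..}" using e0 by auto
      from continuous_on_compact_bound[OF compact_Icc Dcont[OF this]] obtain B where
        B: "B \<ge> 0" "\<And>x. x \<in> {\<epsilon>/2..1+\<delta>} \<Longrightarrow> norm (D x) \<le> B" by blast
      show ?thesis by (rule that[of B]) (use B in simp_all)
    qed
    define N0 :: nat where "N0 = nat \<lceil>2 * real k / \<epsilon>\<rceil> + 1"
    have N0a: "real k / real n \<le> \<epsilon> / 2" if "n \<ge> N0" for n
    proof -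
      have "2 * real k / \<epsilon> \<le> real (nat \<lceil>2 * real k / \<epsilon>\<rceil>)" by linarith
      also have "\<dots> \<le> real n"
      proof -
        have "nat \<lceil>2 * real k / \<epsilon>\<rceil> \<le> n" using add_leD1[OF that[unfolded N0_def]] .
        then show ?thesis by (simp only: of_nat_le_iff)
      qed
      finally have "2 * real k \<le> \<epsilon> * real n" using e0 by (simp add: divide_le_eq mult.commute)
      moreover have "real n > 0" using that unfolding N0_def by simp
      ultimately show ?thesis by (simp add: divide_le_eq field_simps)
    qed
    have N0b: "1 \<le> real N0 ^ k * (1 / real n)^k" if "0 < n" "n < N0" for n
    proof -
      have "1 \<le> real N0 / real n" using that by simp
      then have "1 \<le> (real N0 / real n)^k" by (rule one_le_power)
      then show ?thesis by (simp add: power_divide power_one_over)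
    qed
    define M0 where "M0 = C1 * R powr \<alpha> + \<bar>g 0\<bar>"
    have gM0: "\<bar>g y\<bar> \<le> M0" if "y \<le> R" for y
    proof (cases "y > 0")
      case True
      then have "\<bar>g y\<bar> \<le> C1 * y powr \<alpha>" using C1 that by simp
      also have "\<dots> \<le> C1 * R powr \<alpha>" using C1 True that alpha by (intro mult_left_mono powr_mono2) auto
      finally show ?thesis unfolding M0_def by simp
    next
      case False
      then show ?thesis using g_neg[of y] C1 R_pos unfolding M0_def
        by (cases "y = 0") (auto intro: add_nonneg_nonneg)
    qed
    have M0nn: "M0 \<ge> 0" using gM0[of 0] R_pos by simp
    define B2 where "B2 = Mk + 2^k * M0 * real N0 ^ k"
    have B2nn: "B2 \<ge> 0" using Mk M0nn by (simp add: B2_def)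
    have Q2: "\<bar>g_in g k i n s\<bar> \<le> B2 * (1 / real n)^k"
      if ki: "k \<le> i" "i \<le> n" and s: "-\<delta> \<le> s" "s \<le> real i / real n - \<epsilon>" for n i s
    proof -
      have n: "n > 0" using ki k1 by simp
      have in1: "real i / real n \<le> 1" using ki n by simp
      show ?thesis
      proof (cases "n \<ge> N0")
        case True
        have kn: "real k / real n \<le> \<epsilon> / 2" by (rule N0a[OF True])
        have b: "(real i - real k) / real n - s = (real i / real n - s) - real k / real n"
          by (simp add: diff_divide_distrib)
        have "\<bar>g_in g k i n s\<bar> \<le> (1 / real n)^k * Mk"
        proof (rule g_in_taylor[OF ki(1) n der])
          show "(real i - real k) / real n - s > 0" unfolding b using kn s e0 by linarith
          fix y assume y: "(real i - real k) / real n - s \<le> y" "y \<le> (real i - real k) / real n - s + real k / real n"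
          then show "\<bar>(deriv ^^ k) g y\<bar> \<le> Mk" unfolding D_def[symmetric] b
            using kn s in1 by (intro Mk(2)) linarith+
        qed
        also have "\<dots> \<le> (1 / real n)^k * B2" using M0nn Mk unfolding B2_def by (intro mult_left_mono) auto
        also have "\<dots> = B2 * (1 / real n)^k" by simp
        finally show ?thesis .
      next
        case False
        have "\<bar>g_in g k i n s\<bar> \<le> 2^k * M0"
        proof (rule g_in_crude)
          fix j assume "j \<le> k"
          have "(real i - real j) / real n - s \<le> real i / real n - s" using n by (simp add: diff_divide_distrib)
          also have "\<dots> \<le> R" using in1 s unfolding R_def by simp
          finally show "\<bar>g ((real i - real j) / real n - s)\<bar> \<le> M0" by (rule gM0)
        qed
        also have "\<dots> \<le> 2^k * M0 * (real N0 ^ k * (1 / real n)^k)"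
        proof -
          have "1 \<le> real N0 ^ k * (1 / real n)^k" using N0b[of n] False n by simp
          from mult_left_mono[OF this, of "2^k * M0"] M0nn show ?thesis by simp
        qed
        also have "\<dots> \<le> B2 * (1 / real n)^k" unfolding B2_def using Mk by (simp add: algebra_simps)
        finally show ?thesis .
      qed
    qed
    define CF2 where "CF2 = Xr + K powr \<beta> * B2 powr \<beta> * (1 + \<delta>) + (Jr + B2 powr \<beta> * (1 + \<delta>))"
    have CF2nn: "CF2 \<ge> 0" unfolding CF2_def using Xr Jr delta K by (intro add_nonneg_nonneg mult_nonneg_nonneg) auto
    have Ind_int: "(\<integral>\<^sup>+ s. ennreal c * indicator {-\<delta>..1} s \<partial>lborel) = ennreal c * ennreal (1 + \<delta>)" for c
      using delta by (simp add: nn_integral_cmult_indicator)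
    have FJc_meas: "(\<lambda>s. ennreal (FJ (- s))) \<in> borel_measurable lborel"
      using measurable_compose[OF borel_measurable_uminus[OF measurable_ident_sets[OF refl]] FJ_meas] by simp
    have F2: "(\<integral>\<^sup>+ \<omega>. (\<integral>\<^sup>+ s. ennreal (\<bar>g_in g k i n s * left_lim (\<lambda>u. \<sigma> u \<omega>) s\<bar> powr \<beta>)
                 * indicator {.. real i / real n - \<epsilon>} s \<partial>lborel) \<partial>M)
            + (\<integral>\<^sup>+ s. ennreal (\<bar>g_in g k i n s\<bar> powr \<beta>)
                 * indicator {.. real i / real n - \<epsilon>} s \<partial>lborel)
            \<le> ennreal (CF2 * real n powr (- real k * \<beta>))"
      if ki: "k \<le> i" "i \<le> n" for n i
    proof -
      have n: "n > 0" using ki k1 by simp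
      have in1: "real i / real n \<le> 1" using ki n by simp
      define nk where "nk = real n powr (-(real k*\<beta>))"
      have nknn: "nk \<ge> 0" by (simp add: nk_def)
      have pwk: "((1 / real n)^k * y) powr \<beta> = nk * y powr \<beta>" if "y \<ge> 0" for y
        using that n by (simp add: powr_mult pw_inv_pow nk_def)
      define A where "A = {.. real i / real n - \<epsilon>}"
      have Gb1: "\<bar>g_in g k i n s\<bar> powr \<beta> \<le> nk * \<bar>D (-s)\<bar> powr \<beta>" if "s < -\<delta>" for s
      proof -
        have "\<bar>g_in g k i n s\<bar> powr \<beta> \<le> ((1 / real n)^k * \<bar>D (-s)\<bar>) powr \<beta>"
          using Q1[OF ki that] beta by (intro powr_mono2) auto
        then show ?thesis by (simp add: pwk)
      qed
      have Gb2: "\<bar>g_in g k i n s\<bar> powr \<beta> \<le> nk * B2 powr \<beta>" if "-\<delta> \<le> s" "s \<le> real i / real n - \<epsilon>" for s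
      proof -
        have "\<bar>g_in g k i n s\<bar> powr \<beta> \<le> ((1 / real n)^k * B2) powr \<beta>"
          using Q2[OF ki that] beta by (intro powr_mono2) (auto simp: mult.commute)
        then show ?thesis using B2nn by (simp add: pwk)
      qed
      have Det: "(\<integral>\<^sup>+ s. ennreal (\<bar>g_in g k i n s\<bar> powr \<beta>) * indicator A s \<partial>lborel)
          \<le> ennreal nk * (ennreal Jr + ennreal (B2 powr \<beta>) * ennreal (1 + \<delta>))"
      proof -
        have "(\<integral>\<^sup>+ s. ennreal (\<bar>g_in g k i n s\<bar> powr \<beta>) * indicator A s \<partial>lborel)
            \<le> (\<integral>\<^sup>+ s. ennreal nk * (ennreal (FJ (- s)) + ennreal (B2 powr \<beta>) * indicator {-\<delta>..1} s) \<partial>lborel)"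
        proof (rule nn_integral_mono)
          fix s :: real
          show "ennreal (\<bar>g_in g k i n s\<bar> powr \<beta>) * indicator A s
              \<le> ennreal nk * (ennreal (FJ (- s)) + ennreal (B2 powr \<beta>) * indicator {-\<delta>..1} s)"
          proof (cases "s < -\<delta>")
            case True
            have FJe: "FJ (-s) = \<bar>D (-s)\<bar> powr \<beta>" using True by (simp add: FJ_def)
            have "ennreal (\<bar>g_in g k i n s\<bar> powr \<beta>) * indicator A s \<le> ennreal (\<bar>g_in g k i n s\<bar> powr \<beta>)"
              by (simp add: indicator_def)
            also have "\<dots> \<le> ennreal (nk * FJ (-s))" unfolding FJe by (intro ennreal_leI Gb1 True)
            also have "\<dots> = ennreal nk * ennreal (FJ (-s))" by (rule ennreal_mult[OF nknn FJ_nn])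
            also have "\<dots> \<le> ennreal nk * (ennreal (FJ (- s)) + ennreal (B2 powr \<beta>) * indicator {-\<delta>..1} s)"
              by (intro mult_left_mono) auto
            finally show ?thesis .
          next
            case False
            show ?thesis
            proof (cases "s \<in> A")
              case True
              then have s2: "-\<delta> \<le> s" "s \<le> real i / real n - \<epsilon>" using False by (auto simp: A_def)
              then have s1: "s \<in> {-\<delta>..1}" using in1 e0 by auto
              have "ennreal (\<bar>g_in g k i n s\<bar> powr \<beta>) * indicator A s = ennreal (\<bar>g_in g k i n s\<bar> powr \<beta>)"
                using True by simp
              also have "\<dots> \<le> ennreal (nk * B2 powr \<beta>)" by (intro ennreal_leI Gb2 s2)
              also have "\<dots> = ennreal nk * (ennreal (B2 powr \<beta>) * indicator {-\<delta>..1} s)"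
                using s1 by (simp add: ennreal_mult[OF nknn])
              also have "\<dots> \<le> ennreal nk * (ennreal (FJ (- s)) + ennreal (B2 powr \<beta>) * indicator {-\<delta>..1} s)"
                by (intro mult_left_mono) auto
              finally show ?thesis .
            next
              case False then show ?thesis by simp
            qed
          qed
        qed
        also have "\<dots> = ennreal nk * (\<integral>\<^sup>+ s. ennreal (FJ (- s)) + ennreal (B2 powr \<beta>) * indicator {-\<delta>..1} s \<partial>lborel)"
          by (rule nn_integral_cmult) (use FJc_meas in measurable)
        also have "(\<integral>\<^sup>+ s. ennreal (FJ (- s)) + ennreal (B2 powr \<beta>) * indicator {-\<delta>..1} s \<partial>lborel)
            = (\<integral>\<^sup>+ s. ennreal (FJ (- s)) \<partial>lborel) + (\<integral>\<^sup>+ s. ennreal (B2 powr \<beta>) * indicator {-\<delta>..1} s \<partial>lborel)"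
          by (rule nn_integral_add) (use FJc_meas in auto)
        also have "\<dots> = ennreal Jr + ennreal (B2 powr \<beta>) * ennreal (1 + \<delta>)"
          by (simp only: Jr(2) Ind_int)
        finally show ?thesis .
      qed
      define c where "c = ennreal (K powr \<beta> * B2 powr \<beta>) * ennreal (1 + \<delta>)"
      have Sto: "(\<integral>\<^sup>+ s. ennreal (\<bar>g_in g k i n s * left_lim (\<lambda>u. \<sigma> u \<omega>) s\<bar> powr \<beta>) * indicator A s \<partial>lborel)
          \<le> ennreal nk * (X \<omega> + c)" if \<omega>: "\<omega> \<in> space M" for \<omega>
      proof -
        have "(\<integral>\<^sup>+ s. ennreal (\<bar>g_in g k i n s * left_lim (\<lambda>u. \<sigma> u \<omega>) s\<bar> powr \<beta>) * indicator A s \<partial>lborel)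
            = (\<integral>\<^sup>+ s. ennreal (\<bar>g_in g k i n s * \<sigma> s \<omega>\<bar> powr \<beta>) * indicator A s \<partial>lborel)"
          by (rule nn_integral_cong_AE) (use AEjump[OF \<omega>] in \<open>eventually_elim, simp\<close>)
        also have "\<dots> \<le> (\<integral>\<^sup>+ s. ennreal nk * (Y \<omega> s + ennreal (K powr \<beta> * B2 powr \<beta>) * indicator {-\<delta>..1} s) \<partial>lborel)"
        proof (rule nn_integral_mono)
          fix s :: real
          have split: "\<bar>g_in g k i n s * \<sigma> s \<omega>\<bar> powr \<beta> = \<bar>g_in g k i n s\<bar> powr \<beta> * \<bar>\<sigma> s \<omega>\<bar> powr \<beta>"
            by (simp add: abs_mult powr_mult)
          show "ennreal (\<bar>g_in g k i n s * \<sigma> s \<omega>\<bar> powr \<beta>) * indicator A s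
              \<le> ennreal nk * (Y \<omega> s + ennreal (K powr \<beta> * B2 powr \<beta>) * indicator {-\<delta>..1} s)"
          proof (cases "s < -\<delta>")
            case True
            have Ye: "Y \<omega> s = ennreal (\<bar>D (-s) * \<sigma> s \<omega>\<bar> powr \<beta>)"
              using True by (simp add: Y_def E_eq)
            have "ennreal (\<bar>g_in g k i n s * \<sigma> s \<omega>\<bar> powr \<beta>) * indicator A s \<le> ennreal (\<bar>g_in g k i n s * \<sigma> s \<omega>\<bar> powr \<beta>)"
              by (simp add: indicator_def)
            also have "\<dots> \<le> ennreal (nk * \<bar>D (-s) * \<sigma> s \<omega>\<bar> powr \<beta>)"
            proof (rule ennreal_leI)
              have "\<bar>g_in g k i n s\<bar> powr \<beta> * \<bar>\<sigma> s \<omega>\<bar> powr \<beta> \<le> nk * \<bar>D (-s)\<bar> powr \<beta> * \<bar>\<sigma> s \<omega>\<bar> powr \<beta>"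
                by (intro mult_right_mono Gb1 True) auto
              then show "\<bar>g_in g k i n s * \<sigma> s \<omega>\<bar> powr \<beta> \<le> nk * \<bar>D (-s) * \<sigma> s \<omega>\<bar> powr \<beta>"
                by (simp add: split abs_mult powr_mult mult.assoc)
            qed
            also have "\<dots> = ennreal nk * Y \<omega> s" unfolding Ye by (rule ennreal_mult[OF nknn]) simp
            also have "\<dots> \<le> ennreal nk * (Y \<omega> s + ennreal (K powr \<beta> * B2 powr \<beta>) * indicator {-\<delta>..1} s)"
              by (intro mult_left_mono) auto
            finally show ?thesis .
          next
            case False
            show ?thesis
            proof (cases "s \<in> A")
              case True
              then have s2: "-\<delta> \<le> s" "s \<le> real i / real n - \<epsilon>" using False by (auto simp: A_def)
              then have s1: "s \<in> {-\<delta>..1}" using in1 e0 by auto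
              have sK: "\<bar>\<sigma> s \<omega>\<bar> \<le> K" using K(2)[OF s2(1) \<omega>] .
              have "ennreal (\<bar>g_in g k i n s * \<sigma> s \<omega>\<bar> powr \<beta>) * indicator A s = ennreal (\<bar>g_in g k i n s * \<sigma> s \<omega>\<bar> powr \<beta>)"
                using True by simp
              also have "\<dots> \<le> ennreal (nk * (K powr \<beta> * B2 powr \<beta>))"
              proof (rule ennreal_leI)
                have "\<bar>g_in g k i n s\<bar> powr \<beta> * \<bar>\<sigma> s \<omega>\<bar> powr \<beta> \<le> (nk * B2 powr \<beta>) * K powr \<beta>"
                  using sK beta nknn by (intro mult_mono Gb2 s2 powr_mono2) auto
                then show "\<bar>g_in g k i n s * \<sigma> s \<omega>\<bar> powr \<beta> \<le> nk * (K powr \<beta> * B2 powr \<beta>)"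
                  unfolding split by (simp add: mult_ac)
              qed
              also have "\<dots> = ennreal nk * (ennreal (K powr \<beta> * B2 powr \<beta>) * indicator {-\<delta>..1} s)"
                using s1 by (simp add: ennreal_mult[OF nknn])
              also have "\<dots> \<le> ennreal nk * (Y \<omega> s + ennreal (K powr \<beta> * B2 powr \<beta>) * indicator {-\<delta>..1} s)"
                by (intro mult_left_mono) auto
              finally show ?thesis .
            next
              case False then show ?thesis by simp
            qed
          qed
        qed
        also have "\<dots> = ennreal nk * (\<integral>\<^sup>+ s. Y \<omega> s + ennreal (K powr \<beta> * B2 powr \<beta>) * indicator {-\<delta>..1} s \<partial>lborel)"
          by (rule nn_integral_cmult) (use Y_sec[OF \<omega>] in measurable)
        also have "(\<integral>\<^sup>+ s. Y \<omega> s + ennreal (K powr \<beta> * B2 powr \<beta>) * indicator {-\<delta>..1} s \<partial>lborel)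
            = (\<integral>\<^sup>+ s. Y \<omega> s \<partial>lborel) + (\<integral>\<^sup>+ s. ennreal (K powr \<beta> * B2 powr \<beta>) * indicator {-\<delta>..1} s \<partial>lborel)"
          by (rule nn_integral_add) (use Y_sec[OF \<omega>] in auto)
        also have "\<dots> = X \<omega> + c" by (simp only: X_def Ind_int c_def)
        finally show ?thesis .
      qed
      have "(\<integral>\<^sup>+ \<omega>. (\<integral>\<^sup>+ s. ennreal (\<bar>g_in g k i n s * left_lim (\<lambda>u. \<sigma> u \<omega>) s\<bar> powr \<beta>) * indicator A s \<partial>lborel) \<partial>M)
          \<le> (\<integral>\<^sup>+ \<omega>. ennreal nk * (X \<omega> + c) \<partial>M)"
        by (intro nn_integral_mono Sto)
      also have "\<dots> = ennreal nk * (\<integral>\<^sup>+ \<omega>. X \<omega> + c \<partial>M)"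
        by (rule nn_integral_cmult) (use X_meas in measurable)
      also have "(\<integral>\<^sup>+ \<omega>. X \<omega> + c \<partial>M) = (\<integral>\<^sup>+ \<omega>. X \<omega> \<partial>M) + (\<integral>\<^sup>+ \<omega>. c \<partial>M)"
        by (rule nn_integral_add) (use X_meas in auto)
      also have "\<dots> = ennreal Xr + c" by (simp add: Xr(2) P.emeasure_space_1)
      finally have StoT: "(\<integral>\<^sup>+ \<omega>. (\<integral>\<^sup>+ s. ennreal (\<bar>g_in g k i n s * left_lim (\<lambda>u. \<sigma> u \<omega>) s\<bar> powr \<beta>) * indicator A s \<partial>lborel) \<partial>M)
          \<le> ennreal nk * (ennreal Xr + c)" .
      have "(\<integral>\<^sup>+ \<omega>. (\<integral>\<^sup>+ s. ennreal (\<bar>g_in g k i n s * left_lim (\<lambda>u. \<sigma> u \<omega>) s\<bar> powr \<beta>) * indicator A s \<partial>lborel) \<partial>M)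
          + (\<integral>\<^sup>+ s. ennreal (\<bar>g_in g k i n s\<bar> powr \<beta>) * indicator A s \<partial>lborel)
          \<le> ennreal nk * (ennreal Xr + c) + ennreal nk * (ennreal Jr + ennreal (B2 powr \<beta>) * ennreal (1 + \<delta>))"
        by (rule add_mono[OF StoT Det])
      also have "\<dots> = ennreal (CF2 * real n powr (- real k * \<beta>))"
      proof -
        have e: "ennreal nk * (ennreal Xr + c) + ennreal nk * (ennreal Jr + ennreal (B2 powr \<beta>) * ennreal (1 + \<delta>))
          = ennreal (nk * (Xr + K powr \<beta> * B2 powr \<beta> * (1 + \<delta>)) + nk * (Jr + B2 powr \<beta> * (1 + \<delta>)))"
        proof -
          have a0: "K powr \<beta> * B2 powr \<beta> * (1 + \<delta>) \<ge> 0" and b0: "B2 powr \<beta> * (1 + \<delta>) \<ge> 0"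
            using delta by simp_all
          have c1: "c = ennreal (K powr \<beta> * B2 powr \<beta> * (1 + \<delta>))"
            unfolding c_def using delta by (simp add: ennreal_mult)
          have c2: "ennreal (B2 powr \<beta>) * ennreal (1 + \<delta>) = ennreal (B2 powr \<beta> * (1 + \<delta>))"
            using delta by (simp add: ennreal_mult)
          show ?thesis unfolding c1 c2
            using nknn Xr(1) Jr(1) a0 b0
            by (simp add: ennreal_plus[symmetric] ennreal_mult[symmetric] add_nonneg_nonneg del: ennreal_plus)
        qed
        show ?thesis unfolding e by (simp add: CF2_def nk_def algebra_simps)
      qed
      finally show ?thesis unfolding A_def .
    qed
    define C where "C = (K powr \<beta> + 1) * CF1 + CF2 + 1"
    have c1C: "(K powr \<beta> + 1) * CF1 \<le> C" and c2C: "CF2 \<le> C" and Cpos: "C > 0"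
    proof -
      have "0 \<le> (K powr \<beta> + 1) * CF1" using CF1nn by simp
      then show "(K powr \<beta> + 1) * CF1 \<le> C" "CF2 \<le> C" "C > 0" unfolding C_def using CF2nn by linarith+
    qed
    show "(\<exists>C>0. \<forall>n i. k \<le> i \<and> i \<le> n \<longrightarrow>
           ((\<integral>\<^sup>+ \<omega>. (\<integral>\<^sup>+ s. ennreal (\<bar>g_in g k i n s * left_lim (\<lambda>u. \<sigma> u \<omega>) s\<bar> powr \<beta>)
                 * indicator {real i / real n - \<epsilon> .. real i / real n} s \<partial>lborel) \<partial>M)
            + (\<integral>\<^sup>+ s. ennreal (\<bar>g_in g k i n s\<bar> powr \<beta>)
                 * indicator {real i / real n - \<epsilon> .. real i / real n} s \<partial>lborel)
            \<le> ennreal (C * real n powr (- \<alpha> * \<beta> - 1)))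
         \<and> ((\<integral>\<^sup>+ \<omega>. (\<integral>\<^sup>+ s. ennreal (\<bar>g_in g k i n s * left_lim (\<lambda>u. \<sigma> u \<omega>) s\<bar> powr \<beta>)
                 * indicator {.. real i / real n - \<epsilon>} s \<partial>lborel) \<partial>M)
            + (\<integral>\<^sup>+ s. ennreal (\<bar>g_in g k i n s\<bar> powr \<beta>)
                 * indicator {.. real i / real n - \<epsilon>} s \<partial>lborel)
            \<le> ennreal (C * real n powr (- real k * \<beta>))))"
    proof (intro exI[of _ C] conjI allI impI Cpos)
      fix n i assume ki: "k \<le> i \<and> i \<le> n"
      have "ennreal ((K powr \<beta> + 1) * CF1 * real n powr (- \<alpha> * \<beta> - 1)) \<le> ennreal (C * real n powr (- \<alpha> * \<beta> - 1))"
        by (intro ennreal_leI mult_right_mono c1C) auto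
      with F1[of i n] ki show "(\<integral>\<^sup>+ \<omega>. (\<integral>\<^sup>+ s. ennreal (\<bar>g_in g k i n s * left_lim (\<lambda>u. \<sigma> u \<omega>) s\<bar> powr \<beta>)
                 * indicator {real i / real n - \<epsilon> .. real i / real n} s \<partial>lborel) \<partial>M)
            + (\<integral>\<^sup>+ s. ennreal (\<bar>g_in g k i n s\<bar> powr \<beta>)
                 * indicator {real i / real n - \<epsilon> .. real i / real n} s \<partial>lborel)
            \<le> ennreal (C * real n powr (- \<alpha> * \<beta> - 1))" by (blast intro: order_trans)
      have "ennreal (CF2 * real n powr (- real k * \<beta>)) \<le> ennreal (C * real n powr (- real k * \<beta>))"
        by (intro ennreal_leI mult_right_mono c2C) auto
      with F2[of i n] ki show "(\<integral>\<^sup>+ \<omega>. (\<integral>\<^sup>+ s. ennreal (\<bar>g_in g k i n s * left_lim (\<lambda>u. \<sigma> u \<omega>) s\<bar> powr \<beta>)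
                 * indicator {.. real i / real n - \<epsilon>} s \<partial>lborel) \<partial>M)
            + (\<integral>\<^sup>+ s. ennreal (\<bar>g_in g k i n s\<bar> powr \<beta>)
                 * indicator {.. real i / real n - \<epsilon>} s \<partial>lborel)
            \<le> ennreal (C * real n powr (- real k * \<beta>))" by (blast intro: order_trans)
    qed
  qed
qed
end
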